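(* Let $R$ be a commutative ring with identity $1\neq 0$. Then $R$ is semi-complemented if and only if $R$ satisfies Property $D$ or $R$ is complemented.
   Context: $\mathfrak{N}(R)$ denotes the nilradical of $R$ and $\mathrm{reg}(R)$ the set of regular elements (non-zero-divisors) of $R$. An element $a\in R$ is complemented if there is $b\in R$ with $ab=0$ and $a+b\in\mathrm{reg}(R)$; $R$ is complemented if every element is complemented. $R$ is semi-complemented if every element of $R\setminus\mathfrak{N}(R)$ is complemented. $R$ satisfies Property $D$ if $R\setminus\mathfrak{N}(R)=\mathrm{reg}(R)$. *)

theory Defs
  imports Main
begin

definition nilradical :: "'a::comm_ring_1 set" where
  "nilradical = {x. \<exists>n::nat. x ^ n = 0}"

definition reg :: "'a::comm_ring_1 set" where
  "reg = {r. \<forall>x. r * x = 0 \<longrightarrow> x = 0}"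

definition complemented_elem :: "'a::comm_ring_1 \<Rightarrow> bool" where
  "complemented_elem a \<longleftrightarrow> (\<exists>b. a * b = 0 \<and> a + b \<in> reg)"

definition complemented_ring :: "'a::comm_ring_1 itself \<Rightarrow> bool" where
  "complemented_ring _ \<longleftrightarrow> (\<forall>a::'a. complemented_elem a)"

definition semi_complemented_ring :: "'a::comm_ring_1 itself \<Rightarrow> bool" where
  "semi_complemented_ring _ \<longleftrightarrow> (\<forall>a::'a. a \<notin> nilradical \<longrightarrow> complemented_elem a)"

definition property_D :: "'a::comm_ring_1 itself \<Rightarrow> bool" where
  "property_D _ \<longleftrightarrow> (UNIV - (nilradical :: 'a set)) = reg"

end

theory Submission
  imports Defs
begin

lemma reg_mult: "u \<in> reg \<Longrightarrow> v \<in> reg \<Longrightarrow> (u * v :: 'a::comm_ring_1) \<in> reg"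
proof -
  assume u: "u \<in> reg" and v: "v \<in> reg"
  show ?thesis unfolding reg_def mem_Collect_eq
  proof (intro allI impI)
    fix x assume "u * v * x = 0"
    hence "u * (v * x) = 0" by (simp add: mult.assoc)
    hence "v * x = 0" using u unfolding reg_def by blast
    thus "x = 0" using v unfolding reg_def by blast
  qed
qed

lemma reg_pow: "u \<in> reg \<Longrightarrow> (u::'a::comm_ring_1) ^ k \<in> reg"
proof (induction k)
  case 0
  show ?case by (simp add: reg_def)
next
  case (Suc k)
  thus ?case using reg_mult[of u "u ^ k"] by simp
qed

lemma reg_minus_nil:
  fixes u n :: "'a::comm_ring_1"
  assumes u: "u \<in> reg" and n: "n ^ k = 0"
  shows "u - n \<in> reg"
  unfolding reg_def mem_Collect_eq
proof (intro allI impI)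
  fix x assume h: "(u - n) * x = 0"
  hence ux: "u * x = n * x" by (simp add: algebra_simps)
  have "\<And>j. u ^ j * x = n ^ j * x"
  proof -
    fix j show "u ^ j * x = n ^ j * x"
    proof (induction j)
      case (Suc j)
      have "u ^ Suc j * x = u * (u ^ j * x)" by (simp add: mult.assoc)
      also have "\<dots> = u * (n ^ j * x)" using Suc by simp
      also have "\<dots> = n ^ j * (u * x)" by (simp add: algebra_simps)
      also have "\<dots> = n ^ j * (n * x)" using ux by simp
      finally show ?case by (simp add: algebra_simps)
    qed simp
  qed
  hence ukx: "u ^ k * x = 0" using n by simp
  have "\<forall>y. u ^ k * y = 0 \<longrightarrow> y = 0" using reg_pow[OF u, of k] unfolding reg_def mem_Collect_eq .
  thus "x = 0" using ukx by blast
qed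

lemma core:
  fixes A B z :: "'a::comm_ring_1"
  assumes semi: "semi_complemented_ring TYPE('a)"
    and AB: "A * B = 0" and ABr: "A + B \<in> reg" and An: "A \<notin> nilradical"
    and z2: "z * z = 0" and zA: "z * A = 0" and z0: "z \<noteq> 0"
  shows False
proof -
  have sq: "(A + z) ^ 2 = A ^ 2" using z2 zA by (simp add: power2_eq_square algebra_simps)
  have "A + z \<notin> nilradical"
  proof
    assume "A + z \<in> nilradical"
    then obtain n where "(A + z) ^ n = 0" unfolding nilradical_def by blast
    hence "((A + z) ^ n) ^ 2 = 0" by simp
    hence "((A + z) ^ 2) ^ n = 0" by (simp add: power_mult[symmetric] mult.commute)
    hence "A ^ (2 * n) = 0" using sq by (simp add: power_mult)
    thus False using An unfolding nilradical_def by blast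
  qed
  then obtain c where c1: "(A + z) * c = 0" and c2: "A + z + c \<in> reg"
    using semi unfolding semi_complemented_ring_def complemented_elem_def by blast
  have zB: "z * B \<noteq> 0"
  proof
    assume "z * B = 0"
    hence "(A + B) * z = 0" using zA by (simp add: algebra_simps)
    thus False using ABr z0 unfolding reg_def by blast
  qed
  have "c * z * B = 0"
  proof -
    have "(A + z) * c * B = 0" using c1 by simp
    moreover have "(A + z) * c * B = (A * B) * c + c * z * B" by (simp add: algebra_simps)
    ultimately show ?thesis using AB by simp
  qed
  moreover have "(A + z + c) * (z * B) = (A * B) * z + (z * z) * B + c * z * B"
    by (simp add: algebra_simps)
  ultimately have "(A + z + c) * (z * B) = 0"
    using AB z2 by simp
  thus False using c2 zB unfolding reg_def by blast
qed

theorem mainTheorem1: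
  assumes "(1::'a::comm_ring_1) \<noteq> 0"
  shows "semi_complemented_ring TYPE('a) \<longleftrightarrow>
         (property_D TYPE('a) \<or> complemented_ring TYPE('a))"
proof (rule iffI[rotated])
  assume D: "property_D TYPE('a) \<or> complemented_ring TYPE('a)"
  show "semi_complemented_ring TYPE('a)"
  proof (cases "property_D TYPE('a)")
    case True
    show ?thesis unfolding semi_complemented_ring_def complemented_elem_def
    proof (intro allI impI)
      fix a :: 'a assume "a \<notin> nilradical"
      hence "a \<in> reg" using True unfolding property_D_def by blast
      thus "\<exists>b. a * b = 0 \<and> a + b \<in> reg" by (intro exI[of _ 0]) simp
    qed
  next
    case False
    thus ?thesis using D unfolding semi_complemented_ring_def complemented_ring_def by blast
  qed
next
  assume semi: "semi_complemented_ring TYPE('a)"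
  show "property_D TYPE('a) \<or> complemented_ring TYPE('a)"
  proof (cases "property_D TYPE('a)")
    case True
    thus ?thesis by blast
  next
    case False
    hence nD: "\<not> property_D TYPE('a)" by simp
    have "\<exists>a::'a. a \<notin> nilradical \<and> a \<notin> reg"
    proof (rule ccontr)
      assume nex: "\<not> ?thesis"
      have "reg \<subseteq> UNIV - (nilradical::'a set)"
      proof
        fix r :: 'a assume r: "r \<in> reg"
        have "r \<notin> nilradical"
        proof
          assume "r \<in> nilradical"
          then obtain n where "r ^ n = 0" unfolding nilradical_def by blast
          moreover have "\<forall>x. r ^ n * x = 0 \<longrightarrow> x = 0"
            using reg_pow[OF r, of n] unfolding reg_def mem_Collect_eq .
          ultimately have "(1::'a) = 0" by (metis mult_1_right)
          thus False using assms by simp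
        qed
        thus "r \<in> UNIV - nilradical" by simp
      qed
      hence "property_D TYPE('a)" using nex unfolding property_D_def by blast
      thus False using nD by blast
    qed
    then obtain a :: 'a where an: "a \<notin> nilradical" and ar: "a \<notin> reg" by blast
    then obtain b where ab: "a * b = 0" and abr: "a + b \<in> reg"
      using semi unfolding semi_complemented_ring_def complemented_elem_def by blast
    have bn: "b \<notin> nilradical"
    proof
      assume "b \<in> nilradical"
      then obtain k where "b ^ k = 0" unfolding nilradical_def by blast
      from reg_minus_nil[OF abr this] have "a \<in> reg" by simp
      thus False using ar by blast
    qed
    have red: "x = 0" if xn: "x \<in> nilradical" for x :: 'a
    proof (rule ccontr)
      assume x0: "x \<noteq> 0"
      obtain n where xn0: "x ^ n = 0" using xn unfolding nilradical_def by blast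
      define m where "m = (LEAST m. x ^ m = 0)"
      have xm: "x ^ m = 0" unfolding m_def by (rule LeastI[of _ n]) (rule xn0)
      have m1: "m \<ge> 2"
      proof (rule ccontr)
        assume "\<not> m \<ge> 2"
        hence "m = 0 \<or> m = 1" by auto
        thus False using xm x0 assms by auto
      qed
      define y where "y = x ^ (m - 1)"
      have y0: "y \<noteq> 0"
      proof
        assume "y = 0"
        hence "x ^ (m - 1) = 0" unfolding y_def .
        hence "(LEAST m. x ^ m = 0) \<le> m - 1" by (rule Least_le)
        hence "m \<le> m - 1" unfolding m_def .
        thus False using m1 by simp
      qed
      have y2: "y * y = 0"
      proof -
        have e: "(m - 1) + (m - 1) = m + (m - 2)" using m1 by simp
        have "y * y = x ^ ((m - 1) + (m - 1))" unfolding y_def by (rule power_add[symmetric])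
        also have "\<dots> = x ^ (m + (m - 2))" unfolding e ..
        also have "\<dots> = x ^ m * x ^ (m - 2)" by (rule power_add)
        also have "\<dots> = 0" using xm by simp
        finally show ?thesis .
      qed
      show False
      proof (cases "y * b = 0")
        case True
        have yb: "y * b = 0" by fact
        have "b * a = 0" using ab by (simp add: mult.commute)
        moreover have "b + a \<in> reg" using abr by (simp add: add.commute)
        ultimately show False using core[OF semi, of b a y] bn y2 yb y0 by blast
      next
        case False
        have s1: "y * b * (y * b) = (y * y) * (b * b)" by (simp add: ac_simps)
        have s2: "y * b * a = y * (a * b)" by (simp add: ac_simps)
        show False
          using core[OF semi, of a b "y * b"] ab abr an False s1 s2 y2 by simp
      qed
    qed
    have "complemented_ring TYPE('a)"
      unfolding complemented_ring_def
    proof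
      fix x :: 'a
      show "complemented_elem x"
      proof (cases "x \<in> nilradical")
        case True
        hence "x = 0" by (rule red)
        thus ?thesis unfolding complemented_elem_def reg_def
          by (intro exI[of _ 1]) simp
      next
        case False
        thus ?thesis using semi unfolding semi_complemented_ring_def by blast
      qed
    qed
    thus ?thesis by blast
  qed
qed

end
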